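(* Let $P$ be a finite set of points in the plane, and let $T^*$ be a spanning tree of $P$ (with straight-line edges between points of $P$) that minimizes the Wiener index among all spanning trees of $P$. Then $T^*$ is planar, i.e., no two edges of $T^*$ cross each other.
   Context: For a spanning tree $T$ of $P$, each edge $(p,q)$ has weight equal to the Euclidean distance $|pq|$. For $p,q\in P$, $\delta_T(p,q)$ denotes the total weight of the unique path between $p$ and $q$ in $T$. The Wiener index of $T$ is $W(T)=\sum_{\{p,q\}\subseteq P}\delta_T(p,q)$, the sum over all pairs of points of $P$. *)

theory Defs
  imports "HOL-Analysis.Analysis"
begin

type_synonym point = "real ^ 2"

text \<open>A geometric graph on points of the plane: edges are 2-element sets of points.\<close>

definition is_path :: "point set set \<Rightarrow> point \<Rightarrow> point \<Rightarrow> point list \<Rightarrow> bool" where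
  "is_path T p q vs \<longleftrightarrow> vs \<noteq> [] \<and> hd vs = p \<and> last vs = q \<and> distinct vs \<and>
     (\<forall>i < length vs - 1. {vs ! i, vs ! Suc i} \<in> T)"

definition path_weight :: "point list \<Rightarrow> real" where
  "path_weight vs = (\<Sum>i < length vs - 1. dist (vs ! i) (vs ! Suc i))"

definition spanning_tree :: "point set \<Rightarrow> point set set \<Rightarrow> bool" where
  "spanning_tree P T \<longleftrightarrow>
     T \<subseteq> {{p, q} | p q. p \<in> P \<and> q \<in> P \<and> p \<noteq> q} \<and>
     (\<forall>p\<in>P. \<forall>q\<in>P. \<exists>!vs. is_path T p q vs)"

definition tree_dist :: "point set set \<Rightarrow> point \<Rightarrow> point \<Rightarrow> real" where
  "tree_dist T p q = path_weight (THE vs. is_path T p q vs)"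

text \<open>Wiener index: sum over unordered pairs {p,q}; computed as half the sum over ordered
  pairs (tree_dist is symmetric and vanishes on the diagonal).\<close>
definition wiener :: "point set \<Rightarrow> point set set \<Rightarrow> real" where
  "wiener P T = (\<Sum>p\<in>P. \<Sum>q\<in>P. tree_dist T p q) / 2"

definition edges_cross :: "point set \<Rightarrow> point set \<Rightarrow> bool" where
  "edges_cross e f \<longleftrightarrow> (\<exists>p q r s x. e = {p, q} \<and> f = {r, s} \<and>
     closed_segment p q \<inter> closed_segment r s = {x} \<and>
     x \<in> open_segment p q \<and> x \<in> open_segment r s)"

definition planar_tree :: "point set set \<Rightarrow> bool" where
  "planar_tree T \<longleftrightarrow> (\<forall>e\<in>T. \<forall>f\<in>T. \<not> edges_cross e f)"

end

theory Submission
  imports Defs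
begin

definition walk :: "point set set \<Rightarrow> point list \<Rightarrow> bool" where
  "walk E vs \<longleftrightarrow> (\<forall>i < length vs - 1. {vs ! i, vs ! Suc i} \<in> E)"

lemma is_path_walk: "is_path T p q vs \<longleftrightarrow> vs \<noteq> [] \<and> hd vs = p \<and> last vs = q \<and> distinct vs \<and> walk T vs"
  by (simp add: is_path_def walk_def)

lemma walk_Nil[simp]: "walk E []" and walk_single[simp]: "walk E [x]"
  by (auto simp: walk_def)

lemma walk_Cons2[simp]: "walk E (x # y # zs) \<longleftrightarrow> {x,y} \<in> E \<and> walk E (y # zs)"
proof -
  have "walk E (x # y # zs) \<longleftrightarrow> (\<forall>i < Suc (length zs). {(x#y#zs) ! i, (x#y#zs) ! Suc i} \<in> E)"
    by (simp add: walk_def)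
  also have "\<dots> \<longleftrightarrow> {x,y} \<in> E \<and> (\<forall>i < length zs. {(y#zs) ! i, (y#zs) ! Suc i} \<in> E)"
    by (simp add: All_less_Suc2)
  finally show ?thesis by (simp add: walk_def)
qed

lemma path_weight_Nil[simp]: "path_weight [] = 0" and path_weight_single[simp]: "path_weight [x] = 0"
  by (auto simp: path_weight_def)

lemma path_weight_Cons2[simp]: "path_weight (x # y # zs) = dist x y + path_weight (y # zs)"
proof -
  have "path_weight (x # y # zs) = (\<Sum>i < Suc (length zs). dist ((x#y#zs) ! i) ((x#y#zs) ! Suc i))"
    by (simp add: path_weight_def)
  also have "\<dots> = dist x y + (\<Sum>i < length zs. dist ((y#zs) ! i) ((y#zs) ! Suc i))"
    by (subst sum.lessThan_Suc_shift) simp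
  finally show ?thesis by (simp add: path_weight_def)
qed

lemma walk_append:
  assumes "xs \<noteq> []" "ys \<noteq> []"
  shows "walk E (xs @ ys) \<longleftrightarrow> walk E xs \<and> walk E ys \<and> {last xs, hd ys} \<in> E"
  using assms
proof (induction xs rule: induct_list012)
  case (2 x) then show ?case by (cases ys) auto
next
  case (3 x y zs) then show ?case by auto
qed simp

lemma path_weight_append:
  assumes "xs \<noteq> []" "ys \<noteq> []"
  shows "path_weight (xs @ ys) = path_weight xs + dist (last xs) (hd ys) + path_weight ys"
  using assms
proof (induction xs rule: induct_list012)
  case (2 x) then show ?case by (cases ys) auto
next
  case (3 x y zs) then show ?case by auto
qed simp

lemma walk_mono: "walk E vs \<Longrightarrow> E \<subseteq> F \<Longrightarrow> walk F vs"
  by (auto simp: walk_def)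

lemma walk_rev: "walk E vs \<Longrightarrow> walk E (rev vs)"
proof (induction vs rule: induct_list012)
  case (3 x y zs)
  then have "walk E (rev zs @ [y])" by simp
  moreover have "{y,x} \<in> E" using 3 by (simp add: insert_commute)
  ultimately show ?case using walk_append[of "rev zs @ [y]" "[x]"] by simp
qed auto

lemma path_weight_rev: "path_weight (rev vs) = path_weight vs"
proof (induction vs rule: induct_list012)
  case (3 x y zs)
  have "path_weight (rev (x#y#zs)) = path_weight (rev zs @ [y]) + dist y x"
    using path_weight_append[of "rev zs @ [y]" "[x]"] by simp
  then show ?case using 3 by (simp add: dist_commute)
qed auto

lemma path_weight_ge: "vs \<noteq> [] \<Longrightarrow> dist (hd vs) (last vs) \<le> path_weight vs"
proof (induction vs rule: induct_list012)
  case (3 x y zs)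
  then show ?case using dist_triangle[of x "last (y#zs)" y] by simp
qed auto

lemma walk_hdS:
  assumes "walk E vs" "\<And>x y. {x,y} \<in> E \<Longrightarrow> S x = S y" "z \<in> set vs"
  shows "S z = S (hd vs)"
  using assms
proof (induction vs rule: induct_list012)
  case (3 x y zs)
  then show ?case by auto
qed auto

lemma edge_distinct:
  assumes "distinct vs" "i < length vs - 1" "j < length vs - 1" "i \<noteq> j"
  shows "{vs ! i, vs ! Suc i} \<noteq> {vs ! j, vs ! Suc j}"
proof
  assume eq: "{vs ! i, vs ! Suc i} = {vs ! j, vs ! Suc j}"
  have le: "i < length vs" "Suc i < length vs" "j < length vs" "Suc j < length vs" using assms by auto
  have "vs ! i = vs ! j \<or> vs ! i = vs ! Suc j" using eq by blast
  hence "i = j \<or> i = Suc j" using assms(1) le nth_eq_iff_index_eq by metis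
  moreover have "vs ! Suc i = vs ! j \<or> vs ! Suc i = vs ! Suc j" using eq by blast
  hence "Suc i = j \<or> Suc i = Suc j" using assms(1) le nth_eq_iff_index_eq by metis
  ultimately show False using assms(4) by auto
qed

lemma walk_split:
  assumes "distinct vs" "walk E vs" "i < length vs - 1"
  shows "walk (E - {{vs ! i, vs ! Suc i}}) (take (Suc i) vs)"
    "walk (E - {{vs ! i, vs ! Suc i}}) (drop (Suc i) vs)"
proof -
  show "walk (E - {{vs ! i, vs ! Suc i}}) (take (Suc i) vs)"
    unfolding walk_def
  proof (intro allI impI)
    fix j assume j: "j < length (take (Suc i) vs) - 1"
    hence "j < i" "j < length vs - 1" using assms by auto
    then show "{take (Suc i) vs ! j, take (Suc i) vs ! Suc j} \<in> E - {{vs ! i, vs ! Suc i}}"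
      using assms edge_distinct[OF assms(1) _ assms(3), of j] by (auto simp: walk_def)
  qed
  show "walk (E - {{vs ! i, vs ! Suc i}}) (drop (Suc i) vs)"
    unfolding walk_def
  proof (intro allI impI)
    fix j assume j: "j < length (drop (Suc i) vs) - 1"
    hence "Suc i + j < length vs - 1" "Suc i + j \<noteq> i" using assms by auto
    then show "{drop (Suc i) vs ! j, drop (Suc i) vs ! Suc j} \<in> E - {{vs ! i, vs ! Suc i}}"
      using assms edge_distinct[OF assms(1) _ assms(3), of "Suc i + j"] by (auto simp: walk_def)
  qed
qed


definition tpath :: "point set set \<Rightarrow> point \<Rightarrow> point \<Rightarrow> point list" where
  "tpath T u v = (THE vs. is_path T u v vs)"

lemma tree_dist_tpath: "tree_dist T u v = path_weight (tpath T u v)"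
  by (simp add: tree_dist_def tpath_def)

lemma st_edge: "spanning_tree P T \<Longrightarrow> {x,y} \<in> T \<Longrightarrow> x \<in> P \<and> y \<in> P \<and> x \<noteq> y"
  unfolding spanning_tree_def by (auto simp: doubleton_eq_iff)

lemma tpath_is_path: "spanning_tree P T \<Longrightarrow> u \<in> P \<Longrightarrow> v \<in> P \<Longrightarrow> is_path T u v (tpath T u v)"
  unfolding spanning_tree_def tpath_def by (metis theI')

lemma tpath_unique: "spanning_tree P T \<Longrightarrow> u \<in> P \<Longrightarrow> v \<in> P \<Longrightarrow> is_path T u v vs \<Longrightarrow> tpath T u v = vs"
  unfolding spanning_tree_def tpath_def by (metis the1_equality)

lemma tpath_refl: "spanning_tree P T \<Longrightarrow> u \<in> P \<Longrightarrow> tpath T u u = [u]"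
  by (rule tpath_unique) (auto simp: is_path_walk)

lemma tree_dist_refl: "spanning_tree P T \<Longrightarrow> u \<in> P \<Longrightarrow> tree_dist T u u = 0"
  by (simp add: tree_dist_tpath tpath_refl)

lemma tpath_edge: "spanning_tree P T \<Longrightarrow> {u,v} \<in> T \<Longrightarrow> tpath T u v = [u,v]"
  using st_edge[of P T u v] by (intro tpath_unique) (auto simp: is_path_walk)

lemma tree_dist_sym: "spanning_tree P T \<Longrightarrow> u \<in> P \<Longrightarrow> v \<in> P \<Longrightarrow> tree_dist T u v = tree_dist T v u"
proof -
  assume st: "spanning_tree P T" and uv: "u \<in> P" "v \<in> P"
  have p: "is_path T u v (tpath T u v)" using tpath_is_path[OF st uv] .
  hence "is_path T v u (rev (tpath T u v))"
    by (auto simp: is_path_walk hd_rev last_rev walk_rev)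
  hence "tpath T v u = rev (tpath T u v)" using tpath_unique[OF st uv(2,1)] by simp
  thus ?thesis by (simp add: tree_dist_tpath path_weight_rev)
qed

lemma tree_dist_ge: "spanning_tree P T \<Longrightarrow> u \<in> P \<Longrightarrow> v \<in> P \<Longrightarrow> dist u v \<le> tree_dist T u v"
  using tpath_is_path[of P T u v] path_weight_ge[of "tpath T u v"]
  by (auto simp: tree_dist_tpath is_path_walk)

lemma tpath_step:
  assumes st: "spanning_tree P T" and e: "{x,y} \<in> T" and a: "a \<in> P"
  shows "tpath T x a = x # tpath T y a \<or> tpath T y a = y # tpath T x a"
proof -
  have xy: "x \<in> P" "y \<in> P" "x \<noteq> y" using st_edge[OF st e] by auto
  have px: "is_path T x a (tpath T x a)" using tpath_is_path[OF st xy(1) a] .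
  have py: "is_path T y a (tpath T y a)" using tpath_is_path[OF st xy(2) a] .
  show ?thesis
  proof (cases "y \<in> set (tpath T x a)")
    case False
    have "is_path T y a (y # tpath T x a)"
      using px False e by (cases "tpath T x a") (auto simp: is_path_walk insert_commute)
    then show ?thesis using tpath_unique[OF st xy(2) a] by auto
  next
    case True
    let ?xs = "tpath T x a"
    obtain k where k: "k < length ?xs" "?xs ! k = y" using True by (metis in_set_conv_nth)
    have x0: "?xs ! 0 = x" using px by (cases ?xs) (auto simp: is_path_walk)
    have "k \<noteq> 0" using k xy x0 by (metis)
    have d: "is_path T y a (drop k ?xs)"
      using px k by (auto simp: is_path_walk hd_drop_conv_nth walk_def)
    have dk: "drop k ?xs = tpath T y a" using tpath_unique[OF st xy(2) a d] by simp
    have "x \<notin> set (drop k ?xs)"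
    proof
      assume "x \<in> set (drop k ?xs)"
      then obtain j where "j < length ?xs - k" "?xs ! (k + j) = x" by (auto simp: in_set_conv_nth)
      moreover have "k + j < length ?xs" "0 < length ?xs" using calculation k by auto
      moreover have "distinct ?xs" using px by (simp add: is_path_walk)
      ultimately have "k + j = 0" using x0 nth_eq_iff_index_eq[of ?xs "k+j" 0] by auto
      with \<open>k \<noteq> 0\<close> show False by simp
    qed
    hence "is_path T x a (x # drop k ?xs)"
      using d e by (cases "drop k ?xs") (auto simp: is_path_walk)
    then show ?thesis using tpath_unique[OF st xy(1) a] dk by auto
  qed
qed


definition cut :: "point set \<Rightarrow> point set set \<Rightarrow> (point \<Rightarrow> bool) \<Rightarrow> point \<Rightarrow> point \<Rightarrow> bool" where
  "cut P T S a b \<longleftrightarrow> a \<in> P \<and> b \<in> P \<and> {a,b} \<in> T \<and> S a \<and> \<not> S b \<and>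
     (\<forall>x y. {x,y} \<in> T \<longrightarrow> S x \<noteq> S y \<longrightarrow> {x,y} = {a,b})"

lemma cut_flip: "cut P T S a b \<Longrightarrow> cut P T (\<lambda>z. \<not> S z) b a"
  unfolding cut_def by (auto simp: insert_commute)

lemma side_cut:
  assumes st: "spanning_tree P T" and e: "{a,b} \<in> T"
  shows "cut P T (\<lambda>v. b \<notin> set (tpath T v a)) a b"
proof -
  have ab: "a \<in> P" "b \<in> P" "a \<noteq> b" using st_edge[OF st e] by auto
  have ba: "tpath T b a = [b,a]" using tpath_edge[OF st] e by (simp add: insert_commute)
  have main: "(b \<in> set (tpath T x a)) = (b \<in> set (tpath T y a))"
    if xy: "{x,y} \<in> T" "{x,y} \<noteq> {a,b}" for x y
  proof -
    have "tpath T x a = x # tpath T y a \<or> tpath T y a = y # tpath T x a"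
      using tpath_step[OF st xy(1) ab(1)] .
    moreover have "tpath T y a \<noteq> [a]" if "tpath T x a = x # tpath T y a" "x = b"
    proof
      assume "tpath T y a = [a]"
      have yP: "y \<in> P" using st_edge[OF st xy(1)] by auto
      have "hd (tpath T y a) = y" using tpath_is_path[OF st yP ab(1)] by (simp add: is_path_walk)
      then show False using that \<open>tpath T y a = [a]\<close> xy(2) by auto
    qed
    moreover have "tpath T x a \<noteq> [a]" if "tpath T y a = y # tpath T x a" "y = b"
    proof
      assume "tpath T x a = [a]"
      have xP: "x \<in> P" using st_edge[OF st xy(1)] by auto
      have "hd (tpath T x a) = x" using tpath_is_path[OF st xP ab(1)] by (simp add: is_path_walk)
      then show False using that \<open>tpath T x a = [a]\<close> xy(2) ba by (auto simp: insert_commute)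
    qed
    ultimately show ?thesis using ba by auto
  qed
  show ?thesis unfolding cut_def
    using ab e main ba tpath_refl[OF st ab(1)] by auto
qed


lemma cut_basic: "cut P T S a b \<Longrightarrow> a \<in> P \<and> b \<in> P \<and> {a,b} \<in> T \<and> S a \<and> \<not> S b"
  by (simp add: cut_def)

lemma cut_resp: "cut P T S a b \<Longrightarrow> {x,y} \<in> T - {{a,b}} \<Longrightarrow> S x = S y"
  unfolding cut_def by blast

lemma same_side_E0:
  assumes st: "spanning_tree P T" and ct: "cut P T S a b"
    and p: "is_path T u v vs" and s: "S u = S v"
  shows "walk (T - {{a,b}}) vs"
proof (rule ccontr)
  assume nw: "\<not> walk (T - {{a,b}}) vs"
  have w: "walk T vs" and d: "distinct vs" and ne: "vs \<noteq> []" and hl: "hd vs = u" "last vs = v"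
    using p by (auto simp: is_path_walk)
  obtain i where i: "i < length vs - 1" "{vs ! i, vs ! Suc i} \<notin> T - {{a,b}}"
    using nw by (auto simp: walk_def)
  have eq: "{vs ! i, vs ! Suc i} = {a,b}" using i w by (auto simp: walk_def)
  have w1: "walk (T - {{a,b}}) (take (Suc i) vs)" and w2: "walk (T - {{a,b}}) (drop (Suc i) vs)"
    using walk_split[OF d w i(1)] eq by auto
  have resp: "\<And>x y. {x,y} \<in> T - {{a,b}} \<Longrightarrow> S x = S y" using cut_resp[OF ct] by blast
  have "vs ! i \<in> set (take (Suc i) vs)" using i(1) by (auto simp: in_set_conv_nth)
  hence s1: "S (vs ! i) = S u"
    using walk_hdS[where S=S, OF w1 resp] i(1) hl ne by (auto simp: hd_take)
  have "v \<in> set (drop (Suc i) vs)" using i(1) hl ne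
    by (metis Suc_lessI diff_Suc_1 drop_eq_Nil2 last_drop last_in_set length_greater_0_conv less_diff_conv not_le Suc_eq_plus1)
  hence s2: "S v = S (vs ! Suc i)"
    using walk_hdS[where S=S, OF w2 resp] i(1) by (auto simp: hd_drop_conv_nth)
  have "S (vs ! i) \<noteq> S (vs ! Suc i)" using eq cut_basic[OF ct] by (auto simp: doubleton_eq_iff)
  then show False using s s1 s2 by simp
qed

lemma R0:
  assumes st: "spanning_tree P T" and ct: "cut P T S a b" and uv: "u \<in> P" "v \<in> P" and s: "S u = S v"
  shows "is_path (insert {x,y} (T - {{a,b}})) u v (tpath T u v)"
proof -
  have p: "is_path T u v (tpath T u v)" using tpath_is_path[OF st uv] .
  have "walk (T - {{a,b}}) (tpath T u v)" using same_side_E0[OF st ct p s] .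
  then show ?thesis using p by (auto simp: is_path_walk intro: walk_mono)
qed

lemma R1:
  assumes st: "spanning_tree P T" and ct: "cut P T S a b"
    and xy: "x \<in> P" "y \<in> P" "S x" "\<not> S y"
    and uv: "u \<in> P" "v \<in> P" "S u" "\<not> S v"
  shows "is_path (insert {x,y} (T - {{a,b}})) u v (tpath T u x @ tpath T y v)"
proof -
  let ?E0 = "T - {{a,b}}"
  have p1: "is_path T u x (tpath T u x)" using tpath_is_path[OF st uv(1) xy(1)] .
  have p2: "is_path T y v (tpath T y v)" using tpath_is_path[OF st xy(2) uv(2)] .
  have w1: "walk ?E0 (tpath T u x)" using same_side_E0[OF st ct p1] uv xy by simp
  have w2: "walk ?E0 (tpath T y v)" using same_side_E0[OF st ct p2] uv xy by simp
  have resp: "\<And>x y. {x,y} \<in> T - {{a,b}} \<Longrightarrow> S x = S y" using cut_resp[OF ct] by blast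
  have s1: "\<And>z. z \<in> set (tpath T u x) \<Longrightarrow> S z" using walk_hdS[where S=S, OF w1 resp] p1 uv by (auto simp: is_path_walk)
  have s2: "\<And>z. z \<in> set (tpath T y v) \<Longrightarrow> \<not> S z" using walk_hdS[where S=S, OF w2 resp] p2 xy by (auto simp: is_path_walk)
  have disj: "set (tpath T u x) \<inter> set (tpath T y v) = {}" using s1 s2 by blast
  have "walk (insert {x,y} ?E0) (tpath T u x @ tpath T y v)"
    using p1 p2 w1 w2 by (auto simp: is_path_walk walk_append intro: walk_mono)
  then show ?thesis using p1 p2 disj by (auto simp: is_path_walk)
qed

lemma RU:
  assumes st: "spanning_tree P T" and ct: "cut P T S a b"
    and xy: "x \<in> P" "y \<in> P" "S x" "\<not> S y"
    and uv: "u \<in> P" "v \<in> P"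
    and p: "is_path (insert {x,y} (T - {{a,b}})) u v vs"
  shows "(S u = S v \<and> vs = tpath T u v) \<or> (S u \<and> \<not> S v \<and> vs = tpath T u x @ tpath T y v)
       \<or> (\<not> S u \<and> S v \<and> vs = tpath T u y @ tpath T x v)"
proof -
  let ?E0 = "T - {{a,b}}"
  let ?T' = "insert {x,y} ?E0"
  have w: "walk ?T' vs" and d: "distinct vs" and ne: "vs \<noteq> []" and hl: "hd vs = u" "last vs = v"
    using p by (auto simp: is_path_walk)
  have resp: "\<And>x y. {x,y} \<in> T - {{a,b}} \<Longrightarrow> S x = S y" using cut_resp[OF ct] by blast
  show ?thesis
  proof (cases "walk ?E0 vs")
    case True
    have "is_path T u v vs" using p True by (auto simp: is_path_walk intro: walk_mono)
    hence "vs = tpath T u v" using tpath_unique[OF st uv] by simp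
    moreover have "S v = S u" using walk_hdS[where S=S, OF True resp, of v] hl ne by auto
    ultimately show ?thesis by simp
  next
    case False
    obtain i where i: "i < length vs - 1" "{vs ! i, vs ! Suc i} \<notin> ?E0"
      using False by (auto simp: walk_def)
    have eq: "{vs ! i, vs ! Suc i} = {x,y}" using i w by (auto simp: walk_def)
    have sub: "?T' - {{x,y}} \<subseteq> ?E0" by blast
    have w1: "walk ?E0 (take (Suc i) vs)" and w2: "walk ?E0 (drop (Suc i) vs)"
      using walk_split[OF d w i(1)] eq walk_mono[OF _ sub] by auto
    have ne1: "take (Suc i) vs \<noteq> []" and ne2: "drop (Suc i) vs \<noteq> []" using i(1) ne by auto
    have hd1: "hd (take (Suc i) vs) = u" using hl ne by (simp add: hd_take)
    have last1: "last (take (Suc i) vs) = vs ! i" using i(1) ne by (auto simp: last_conv_nth min_def)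
    have hd2: "hd (drop (Suc i) vs) = vs ! Suc i" using i(1) by (simp add: hd_drop_conv_nth)
    have last2: "last (drop (Suc i) vs) = v" using hl ne2 by (simp add: last_drop)
    have pt1: "is_path T u (vs ! i) (take (Suc i) vs)"
      using w1 ne1 hd1 last1 d by (auto simp: is_path_walk intro: walk_mono)
    have pt2: "is_path T (vs ! Suc i) v (drop (Suc i) vs)"
      using w2 ne2 hd2 last2 d by (auto simp: is_path_walk intro: walk_mono)
    have s1: "S (vs ! i) = S u"
      using walk_hdS[where S=S, OF w1 resp, of "vs ! i"] hd1 last1 ne1 by (metis last_in_set)
    have s2: "S v = S (vs ! Suc i)"
      using walk_hdS[where S=S, OF w2 resp, of v] hd2 last2 ne2 by (metis last_in_set)
    have vs_eq: "vs = take (Suc i) vs @ drop (Suc i) vs" by simp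
    from eq have "(vs ! i = x \<and> vs ! Suc i = y) \<or> (vs ! i = y \<and> vs ! Suc i = x)"
      by (auto simp: doubleton_eq_iff)
    then show ?thesis
    proof
      assume c: "vs ! i = x \<and> vs ! Suc i = y"
      have "take (Suc i) vs = tpath T u x" using tpath_unique[OF st uv(1) xy(1)] pt1 c by simp
      moreover have "drop (Suc i) vs = tpath T y v" using tpath_unique[OF st xy(2) uv(2)] pt2 c by simp
      ultimately show ?thesis using vs_eq s1 s2 c xy by metis
    next
      assume c: "vs ! i = y \<and> vs ! Suc i = x"
      have "take (Suc i) vs = tpath T u y" using tpath_unique[OF st uv(1) xy(2)] pt1 c by simp
      moreover have "drop (Suc i) vs = tpath T x v" using tpath_unique[OF st xy(1) uv(2)] pt2 c by simp
      ultimately show ?thesis using vs_eq s1 s2 c xy by metis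
    qed
  qed
qed


lemma reconnect_st:
  assumes st: "spanning_tree P T" and ct: "cut P T S a b"
    and xy: "x \<in> P" "y \<in> P" "S x" "\<not> S y"
  shows "spanning_tree P (insert {x,y} (T - {{a,b}}))"
proof -
  let ?T' = "insert {x,y} (T - {{a,b}})"
  have eqT: "insert {y,x} (T - {{b,a}}) = ?T'" by (simp add: insert_commute)
  have ct': "cut P T (\<lambda>z. \<not> S z) b a" using cut_flip[OF ct] .
  have "x \<noteq> y" using xy by auto
  hence sub: "?T' \<subseteq> {{p, q} | p q. p \<in> P \<and> q \<in> P \<and> p \<noteq> q}"
    using st xy unfolding spanning_tree_def by auto
  have ex: "\<exists>!vs. is_path ?T' u v vs" if uv: "u \<in> P" "v \<in> P" for u v
  proof -
    define c where "c = (if S u = S v then tpath T u v else if S u then tpath T u x @ tpath T y v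
        else tpath T u y @ tpath T x v)"
    have "is_path ?T' u v c"
    proof (cases "S u = S v")
      case True then show ?thesis using R0[OF st ct uv True] by (simp add: c_def)
    next
      case False
      show ?thesis
      proof (cases "S u")
        case True then show ?thesis using R1[OF st ct xy uv] False by (simp add: c_def)
      next
        case F2: False
        have "is_path (insert {y,x} (T - {{b,a}})) u v (tpath T u y @ tpath T x v)"
          using R1[OF st ct' xy(2,1) _ _ uv] F2 False xy by simp
        then show ?thesis using False F2 by (simp add: c_def eqT)
      qed
    qed
    moreover have "vs = c" if "is_path ?T' u v vs" for vs
      using RU[OF st ct xy uv that] by (auto simp: c_def)
    ultimately show ?thesis by blast
  qed
  show ?thesis unfolding spanning_tree_def
    using sub ex by (intro conjI ballI) assumption+
qed

lemma reconnect_dist: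
  assumes st: "spanning_tree P T" and ct: "cut P T S a b"
    and xy: "x \<in> P" "y \<in> P" "S x" "\<not> S y" and uv: "u \<in> P" "v \<in> P"
  shows "tree_dist (insert {x,y} (T - {{a,b}})) u v =
    (if S u = S v then tree_dist T u v else if S u then tree_dist T u x + dist x y + tree_dist T y v
     else tree_dist T u y + dist y x + tree_dist T x v)"
proof -
  let ?T' = "insert {x,y} (T - {{a,b}})"
  have st': "spanning_tree P ?T'" using reconnect_st[OF st ct xy] .
  have p: "is_path ?T' u v (tpath ?T' u v)" using tpath_is_path[OF st' uv] .
  have ne: "tpath T p q \<noteq> []" "hd (tpath T p q) = p" "last (tpath T p q) = q" if "p \<in> P" "q \<in> P" for p q
    using tpath_is_path[OF st that] by (auto simp: is_path_walk)
  have td: "tree_dist ?T' u v = path_weight (tpath ?T' u v)" by (simp add: tree_dist_tpath)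
  have app: "path_weight (tpath T p q @ tpath T r s) = tree_dist T p q + dist q r + tree_dist T r s"
    if "p \<in> P" "q \<in> P" "r \<in> P" "s \<in> P" for p q r s
    using path_weight_append[of "tpath T p q" "tpath T r s"] ne[OF that(1,2)] ne[OF that(3,4)]
    by (simp add: tree_dist_tpath)
  from RU[OF st ct xy uv p] show ?thesis
  proof (elim disjE conjE)
    assume "S u = S v" "tpath ?T' u v = tpath T u v"
    then show ?thesis using td by (simp add: tree_dist_tpath)
  next
    assume "S u" "\<not> S v" "tpath ?T' u v = tpath T u x @ tpath T y v"
    then show ?thesis using td app[OF uv(1) xy(1,2) uv(2)] by simp
  next
    assume "\<not> S u" "S v" "tpath ?T' u v = tpath T u y @ tpath T x v"
    then show ?thesis using td app[OF uv(1) xy(2,1) uv(2)] by simp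
  qed
qed

lemma tree_formula:
  assumes st: "spanning_tree P T" and ct: "cut P T S a b"
    and uv: "u \<in> P" "w \<in> P" "S u" "\<not> S w"
  shows "tree_dist T u w = tree_dist T u a + dist a b + tree_dist T b w"
proof -
  have c: "a \<in> P" "b \<in> P" "{a,b} \<in> T" "S a" "\<not> S b" using cut_basic[OF ct] by auto
  have "insert {a,b} (T - {{a,b}}) = T" using c by auto
  then show ?thesis using reconnect_dist[OF st ct c(1,2,4,5) uv(1,2)] uv by simp
qed


lemma exchange:
  assumes fin: "finite P" and st: "spanning_tree P T"
    and mini: "\<forall>T'. spanning_tree P T' \<longrightarrow> wiener P T \<le> wiener P T'"
    and ct: "cut P T S a b" and c: "c \<in> P" "\<not> S c"
  shows "0 \<le> (\<Sum>v\<in>P. if S v then 0 else dist a c - dist a b + tree_dist T c v - tree_dist T b v)"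
proof -
  have cb: "a \<in> P" "b \<in> P" "{a,b} \<in> T" "S a" "\<not> S b" using cut_basic[OF ct] by auto
  let ?T' = "insert {a,c} (T - {{a,b}})"
  have st': "spanning_tree P ?T'" using reconnect_st[OF st ct cb(1) c(1) cb(4) c(2)] .
  define g where "g w = dist a c - dist a b + tree_dist T c w - tree_dist T b w" for w
  define G where "G = (\<Sum>v\<in>P. if S v then 0 else g v)"
  define N where "N = (\<Sum>v\<in>P. if S v then 1 else 0::real)"
  have ct': "cut P T (\<lambda>z. \<not> S z) b a" using cut_flip[OF ct] .
  have pt: "tree_dist ?T' u v - tree_dist T u v =
      (if S u \<and> \<not> S v then g v else 0) + (if \<not> S u \<and> S v then g u else 0)"
    if uv: "u \<in> P" "v \<in> P" for u v
  proof -
    have d': "tree_dist ?T' u v =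
      (if S u = S v then tree_dist T u v else if S u then tree_dist T u a + dist a c + tree_dist T c v
       else tree_dist T u c + dist c a + tree_dist T a v)"
      using reconnect_dist[OF st ct cb(1) c(1) cb(4) c(2) uv] .
    show ?thesis
    proof (cases "S u = S v")
      case True then show ?thesis using d' by auto
    next
      case False
      show ?thesis
      proof (cases "S u")
        case True
        have "tree_dist T u v = tree_dist T u a + dist a b + tree_dist T b v"
          using tree_formula[OF st ct uv(1,2) True] False True by simp
        then show ?thesis using d' False True by (simp add: g_def)
      next
        case F2: False
        have "tree_dist T u v = tree_dist T u b + dist b a + tree_dist T a v"
          using tree_formula[OF st ct' uv(1,2)] False F2 by simp
        moreover have "tree_dist T u c = tree_dist T c u" "tree_dist T u b = tree_dist T b u"
          using tree_dist_sym[OF st] uv c cb by auto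
        ultimately show ?thesis using d' False F2 by (simp add: g_def dist_commute)
      qed
    qed
  qed
  have s1: "(\<Sum>v\<in>P. if S u \<and> \<not> S v then g v else 0) = (if S u then G else 0)" for u
    by (cases "S u") (auto simp: G_def intro!: sum.cong)
  have s2: "(\<Sum>v\<in>P. if \<not> S u \<and> S v then g u else 0) = (if S u then 0 else g u * N)" for u
    by (cases "S u") (simp_all add: N_def sum_distrib_left if_distrib cong: if_cong)
  have s3: "(\<Sum>u\<in>P. if S u then G else 0) = G * N"
    by (simp add: N_def sum_distrib_left if_distrib cong: if_cong)
  have s4: "(\<Sum>u\<in>P. if S u then 0 else g u * N) = G * N"
    by (auto simp: G_def sum_distrib_right intro!: sum.cong)
  have "(\<Sum>u\<in>P. \<Sum>v\<in>P. tree_dist ?T' u v) - (\<Sum>u\<in>P. \<Sum>v\<in>P. tree_dist T u v)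
      = (\<Sum>u\<in>P. \<Sum>v\<in>P. tree_dist ?T' u v - tree_dist T u v)"
    by (simp add: sum_subtractf)
  also have "\<dots> = (\<Sum>u\<in>P. \<Sum>v\<in>P. (if S u \<and> \<not> S v then g v else 0) + (if \<not> S u \<and> S v then g u else 0))"
    using pt by (intro sum.cong refl) auto
  also have "\<dots> = (\<Sum>u\<in>P. (if S u then G else 0) + (if S u then 0 else g u * N))"
    by (simp only: sum.distrib s1 s2)
  also have "\<dots> = 2 * G * N" by (simp only: sum.distrib s3 s4)
  finally have diff: "(\<Sum>u\<in>P. \<Sum>v\<in>P. tree_dist ?T' u v) - (\<Sum>u\<in>P. \<Sum>v\<in>P. tree_dist T u v) = 2 * G * N" .
  have "wiener P T \<le> wiener P ?T'" using mini st' by blast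
  hence "0 \<le> 2 * G * N" using diff unfolding wiener_def by simp
  moreover have "1 \<le> N"
  proof -
    have "(if S a then 1 else 0::real) \<le> N" unfolding N_def
      by (rule member_le_sum) (auto simp: fin cb)
    then show ?thesis using cb by simp
  qed
  ultimately have "0 \<le> G" by (simp add: zero_le_mult_iff)
  then show ?thesis unfolding G_def g_def by simp
qed


lemma main_contra:
  assumes fin: "finite P" and st: "spanning_tree P T"
    and mini: "\<forall>T'. spanning_tree P T' \<longrightarrow> wiener P T \<le> wiener P T'"
    and ct1: "cut P T S1 a b" and ct2: "cut P T S2 d c" and n1: "\<not> S1 c" and n2: "\<not> S2 b"
    and geo: "dist a c + dist b d < dist a b + dist c d"
  shows False
proof -
  have c1: "a \<in> P" "b \<in> P" "S1 a" "\<not> S1 b" using cut_basic[OF ct1] by auto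
  have c2: "d \<in> P" "c \<in> P" "S2 d" "\<not> S2 c" using cut_basic[OF ct2] by auto
  define h where "h v = (if S1 v then 0 else dist a c - dist a b + tree_dist T c v - tree_dist T b v)
     + (if S2 v then 0 else dist d b - dist d c + tree_dist T b v - tree_dist T c v)" for v
  have "0 \<le> (\<Sum>v\<in>P. h v)"
    using exchange[OF fin st mini ct1 c2(2) n1] exchange[OF fin st mini ct2 c1(2) n2]
    unfolding h_def sum.distrib by linarith
  have sym: "tree_dist T p q = tree_dist T q p" if "p \<in> P" "q \<in> P" for p q
    using tree_dist_sym[OF st that] .
  have hb: "h b < 0" using c1 n2 geo tree_dist_refl[OF st c1(2)] by (simp add: h_def dist_commute)
  have hle: "h v \<le> 0" if v: "v \<in> P" for v
  proof -
    consider "\<not> S1 v" "\<not> S2 v" | "\<not> S1 v" "S2 v" | "S1 v" "\<not> S2 v" | "S1 v" "S2 v" by blast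
    then show ?thesis
    proof cases
      case 1 then show ?thesis using geo by (simp add: h_def dist_commute)
    next
      case 2
      have "tree_dist T v b = tree_dist T v d + dist d c + tree_dist T c b"
        using tree_formula[OF st ct2 v c1(2) 2(2) n2] .
      moreover have "tree_dist T v c = tree_dist T v d + dist d c + tree_dist T c c"
        using tree_formula[OF st ct2 v c2(2) 2(2) c2(4)] .
      moreover have "dist c b \<le> tree_dist T c b" using tree_dist_ge[OF st c2(2) c1(2)] .
      moreover have "dist a c \<le> dist a b + dist b c" by (rule dist_triangle)
      ultimately show ?thesis using 2 sym[OF v c1(2)] sym[OF v c2(2)] tree_dist_refl[OF st c2(2)]
        by (simp add: h_def dist_commute)
    next
      case 3
      have "tree_dist T v c = tree_dist T v a + dist a b + tree_dist T b c"
        using tree_formula[OF st ct1 v c2(2) 3(1) n1] .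
      moreover have "tree_dist T v b = tree_dist T v a + dist a b + tree_dist T b b"
        using tree_formula[OF st ct1 v c1(2) 3(1) c1(4)] .
      moreover have "dist b c \<le> tree_dist T b c" using tree_dist_ge[OF st c1(2) c2(2)] .
      moreover have "dist d b \<le> dist d c + dist c b" by (rule dist_triangle)
      ultimately show ?thesis using 3 sym[OF v c1(2)] sym[OF v c2(2)] tree_dist_refl[OF st c1(2)]
        by (simp add: h_def dist_commute)
    next
      case 4 then show ?thesis by (simp add: h_def)
    qed
  qed
  have "(\<Sum>v\<in>P. h v) = h b + (\<Sum>v\<in>P - {b}. h v)" using sum.remove[OF fin c1(2)] .
  also have "\<dots> < 0" using hb hle sum_nonpos[of "P - {b}" h] by fastforce
  finally show False using \<open>0 \<le> (\<Sum>v\<in>P. h v)\<close> by simp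
qed


lemma geo_aux:
  fixes p q r x :: point
  assumes u: "0 < u" "u \<le> t" "t < 1"
    and xq: "x = (1 - t) *\<^sub>R p + t *\<^sub>R q" and xr: "x = (1 - u) *\<^sub>R p + u *\<^sub>R r"
  shows "q \<in> closed_segment x r"
proof -
  have t0: "0 < t" using u by simp
  have u1: "u < 1" using u by simp
  have "x - p = t *\<^sub>R (q - p)" using xq by (simp add: algebra_simps)
  hence "(1/t) *\<^sub>R (x - p) = q - p" using t0 by simp
  hence hq: "q = p + (1/t) *\<^sub>R (x - p)" by (metis add.commute diff_add_cancel)
  have "x - p = u *\<^sub>R (r - p)" using xr by (simp add: algebra_simps)
  hence "(1/u) *\<^sub>R (x - p) = r - p" using u by simp
  hence hr: "r = p + (1/u) *\<^sub>R (x - p)" by (metis add.commute diff_add_cancel)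
  define m where "m = u * (1 - t) / (t * (1 - u))"
  have m0: "0 \<le> m" using u t0 u1 by (simp add: m_def)
  have m1: "m \<le> 1" using u t0 u1 by (simp add: m_def field_simps mult_left_mono)
  have nz: "1 - u \<noteq> 0" "t \<noteq> 0" "u \<noteq> 0" using u t0 u1 by auto
  have "(1 - m) + m / u = 1 + m * (1 - u) / u" using nz by (simp add: field_simps)
  also have "m * (1 - u) / u = (1 - t) / t" using nz unfolding m_def by (simp add: field_simps)
  also have "1 + (1 - t) / t = 1 / t" using nz by (simp add: field_simps)
  finally have coef: "(1 - m) + m / u = 1 / t" .
  have "(1 - m) *\<^sub>R x + m *\<^sub>R r = p + ((1 - m) + m / u) *\<^sub>R (x - p)"
    by (subst hr) (simp add: algebra_simps)
  also have "\<dots> = q" using coef hq by simp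
  finally show ?thesis unfolding in_segment using m0 m1 by metis
qed

lemma between_eq: "x \<in> closed_segment a b \<longleftrightarrow> dist a b = dist a x + dist x b"
  for a b x :: point
  using between between_mem_segment by metis

lemma cross_ineq:
  fixes p q r s x :: point
  assumes I: "closed_segment p q \<inter> closed_segment r s = {x}"
    and o1: "x \<in> open_segment p q" and o2: "x \<in> open_segment r s"
  shows "dist p r + dist q s < dist p q + dist r s"
proof -
  have x1: "x \<in> closed_segment p q" "x \<noteq> p" "x \<noteq> q" using o1 by (auto simp: open_segment_def)
  have x2: "x \<in> closed_segment r s" "x \<noteq> r" "x \<noteq> s" using o2 by (auto simp: open_segment_def)
  have hpq: "dist p q = dist p x + dist x q" using x1 between_eq by blast
  have hrs: "dist r s = dist r x + dist x s" using x2 between_eq by blast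
  have t1: "dist q s \<le> dist q x + dist x s" by (rule dist_triangle)
  have strict: "dist p r < dist p x + dist x r"
  proof (rule ccontr)
    assume "\<not> ?thesis"
    hence "dist p r = dist p x + dist x r" using dist_triangle[of p r x] by linarith
    hence "x \<in> closed_segment p r" using between_eq by blast
    then obtain u where u: "0 \<le> u" "u \<le> 1" "x = (1 - u) *\<^sub>R p + u *\<^sub>R r" by (auto simp: in_segment)
    obtain t where t: "0 < t" "t < 1" "x = (1 - t) *\<^sub>R p + t *\<^sub>R q" using o1 by (auto simp: in_segment)
    have "u \<noteq> 0" using u x1 by auto
    have "u \<noteq> 1" using u x2 by auto
    show False
    proof (cases "u \<le> t")
      case True
      have "q \<in> closed_segment x r" using geo_aux[of u t x p q r] True t u \<open>u \<noteq> 0\<close> by simp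
      moreover have "closed_segment x r \<subseteq> closed_segment r s" using x2 by (simp add: subset_closed_segment)
      ultimately have "q \<in> closed_segment p q \<inter> closed_segment r s" by auto
      then show False using I x1 by auto
    next
      case False
      have "r \<in> closed_segment x q" using geo_aux[of t u x p r q] False t u \<open>u \<noteq> 1\<close> by simp
      moreover have "closed_segment x q \<subseteq> closed_segment p q" using x1 by (simp add: subset_closed_segment)
      ultimately have "r \<in> closed_segment p q \<inter> closed_segment r s" by auto
      then show False using I x2 by auto
    qed
  qed
  show ?thesis using hpq hrs t1 strict by (simp add: dist_commute)
qed


theorem theorem1:
  fixes P :: "point set" and T :: "point set set"
  assumes "finite P"
    and "spanning_tree P T"
    and "\<forall>T'. spanning_tree P T' \<longrightarrow> wiener P T \<le> wiener P T'"
  shows "planar_tree T"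
  unfolding planar_tree_def
proof (intro ballI notI)
  note fin = assms(1) and st = assms(2) and mini = assms(3)
  fix e f assume ef: "e \<in> T" "f \<in> T" "edges_cross e f"
  then obtain p q r s x where pq: "e = {p,q}" and rs: "f = {r,s}"
    and I: "closed_segment p q \<inter> closed_segment r s = {x}"
    and o1: "x \<in> open_segment p q" and o2: "x \<in> open_segment r s"
    unfolding edges_cross_def by blast
  have eT: "{p,q} \<in> T" and fT: "{r,s} \<in> T" using ef pq rs by auto
  have xnot: "x \<noteq> p" "x \<noteq> q" "x \<noteq> r" "x \<noteq> s" using o1 o2 by (auto simp: open_segment_def)
  have ne: "{r,s} \<noteq> {p,q}"
  proof
    assume "{r,s} = {p,q}"
    hence "closed_segment r s = closed_segment p q"
      by (auto simp: doubleton_eq_iff closed_segment_commute)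
    hence "p \<in> closed_segment p q \<inter> closed_segment r s" by auto
    then show False using I xnot by auto
  qed
  have g1: "dist p r + dist q s < dist p q + dist r s" using cross_ineq[OF I o1 o2] .
  have g2: "dist q r + dist p s < dist q p + dist r s"
    using cross_ineq[of q p r s x] I o1 o2 by (simp add: closed_segment_commute open_segment_commute)
  define S0 where "S0 = (\<lambda>v. q \<notin> set (tpath T v p))"
  have ct0: "cut P T S0 p q" unfolding S0_def using side_cut[OF st eT] .
  have "S0 r = S0 s" using ct0 fT ne unfolding cut_def by blast
  have "\<exists>S1 a b. cut P T S1 a b \<and> ((a = p \<and> b = q) \<or> (a = q \<and> b = p)) \<and> \<not> S1 r \<and> \<not> S1 s"
  proof (cases "S0 r")
    case False then show ?thesis using ct0 \<open>S0 r = S0 s\<close> by blast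
  next
    case True
    have "cut P T (\<lambda>z. \<not> S0 z) q p" using cut_flip[OF ct0] .
    then show ?thesis using True \<open>S0 r = S0 s\<close> by blast
  qed
  then obtain S1 a b where ct1: "cut P T S1 a b" and ab: "(a = p \<and> b = q) \<or> (a = q \<and> b = p)"
    and n1: "\<not> S1 r" "\<not> S1 s" by blast
  define R0 where "R0 = (\<lambda>v. s \<notin> set (tpath T v r))"
  have cr: "cut P T R0 r s" unfolding R0_def using side_cut[OF st fT] .
  have "\<exists>S2 c d. cut P T S2 d c \<and> ((c = r \<and> d = s) \<or> (c = s \<and> d = r)) \<and> \<not> S2 b"
  proof (cases "R0 b")
    case True
    have "cut P T (\<lambda>z. \<not> R0 z) s r" using cut_flip[OF cr] .
    then show ?thesis using True by blast
  next
    case False then show ?thesis using cr by blast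
  qed
  then obtain S2 c d where ct2: "cut P T S2 d c" and cd: "(c = r \<and> d = s) \<or> (c = s \<and> d = r)"
    and n2: "\<not> S2 b" by blast
  have n1c: "\<not> S1 c" using cd n1 by auto
  have geo: "dist a c + dist b d < dist a b + dist c d"
    using ab cd g1 g2 by (auto simp: dist_commute)
  show False using main_contra[OF fin st mini ct1 ct2 n1c n2 geo] .
qed

end
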